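(* Let $W=\langle s_0,\dots,s_{n-1}\rangle$ be a finite string C-group, $\mathcal{P}(W)$ the regular polytope with automorphism group $W$, and $N\le W$ such that $\mathcal{P}(W)/N$ is a polytope admitting the flag action of $W$, with $N$ the stabilizer of the base flag $\Phi$. Let $u_1=1,u_2,\dots,u_r\in W$ be chosen so that the flags $\Phi^{u_1},\dots,\Phi^{u_r}$ are representatives of the $r$ orbits of the automorphism group of $\mathcal{P}(W)/N$ on its flags. Let $\sigma_1,\dots,\sigma_t$ be the distinct Coxeter elements of $W$, and let $m_{j,l}=|\{\Phi^{u_j}\alpha : \alpha\in\langle\sigma_l\rangle\}|$, the size of the orbit of $\Phi^{u_j}$ under the flag action of $\langle\sigma_l\rangle$. For $0\le i\le n-1$ let $H_i=\langle s_k : k\ne i\rangle$. If $(\sigma_l)^kH_i\cap N^{u_j}=\emptyset$ for all $i$, $j$, $l$ and all $1\le k<m_{j,l}$, then $\mathcal{P}(W)/N$ has acoptic Petrie schemes.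
   Context: Abstract polytopes are graded posets with least and greatest faces, all flags of equal length, strongly connected, satisfying the diamond condition. A string C-group is generated by distinct involutions $s_0,\dots,s_{n-1}$ with $(s_is_j)^2=1$ for $|i-j|>1$ and the intersection property. The flag action of $W$ on a polytope sends a flag $\Phi$ under $s_i$ to the unique flag $\Phi^{s_i}$ differing from $\Phi$ only in its face of rank $i$ (assumed to extend to a well-defined right action). A Coxeter element of $W$ is a product of the generators $s_0,\dots,s_{n-1}$ in which each generator appears exactly once (in some order). The exchange map $\varrho_i$ sends each flag to the flag differing from it only in rank $i$; a Petrie map $\sigma$ is a composition of $\varrho_0,\dots,\varrho_{n-1}$ with each appearing exactly once (e.g. the flag action of a Coxeter element). A Petrie sequence is a sequence of flags $(\dots,\Phi\sigma^{-1},\Phi,\Phi\sigma,\Phi\sigma^2,\dots)$ for a fixed Petrie map $\sigma$ and flag $\Phi$; its Petrie scheme is its shortest cyclic listing if the sequence is periodic, and the sequence itself otherwise. A polytope has acoptic Petrie schemes if each proper face (face other than the least and greatest) appears at most once in each Petrie scheme, i.e. among the flags of a Petrie scheme no proper face occurs in two different positions. $N^{u}=u^{-1}Nu$. *)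

theory Defs
  imports "HOL-Algebra.Algebra"
begin

definition string_C_group :: "('a, 'b) monoid_scheme \<Rightarrow> (nat \<Rightarrow> 'a) \<Rightarrow> nat \<Rightarrow> bool" where
  "string_C_group G s n \<longleftrightarrow>
     group G \<and>
     (\<forall>i<n. s i \<in> carrier G \<and> s i \<noteq> \<one>\<^bsub>G\<^esub> \<and> s i \<otimes>\<^bsub>G\<^esub> s i = \<one>\<^bsub>G\<^esub>) \<and>
     inj_on s {..<n} \<and>
     generate G (s ` {..<n}) = carrier G \<and>
     (\<forall>i<n. \<forall>j<n. (i + 1 < j \<or> j + 1 < i) \<longrightarrow>
        (s i \<otimes>\<^bsub>G\<^esub> s j) [^]\<^bsub>G\<^esub> (2::nat) = \<one>\<^bsub>G\<^esub>) \<and>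
     (\<forall>I J. I \<subseteq> {..<n} \<longrightarrow> J \<subseteq> {..<n} \<longrightarrow>
        generate G (s ` I) \<inter> generate G (s ` J) = generate G (s ` (I \<inter> J)))"

definition coxeter_element :: "('a, 'b) monoid_scheme \<Rightarrow> (nat \<Rightarrow> 'a) \<Rightarrow> nat \<Rightarrow> 'a \<Rightarrow> bool" where
  "coxeter_element G s n \<sigma> \<longleftrightarrow>
     (\<exists>\<pi>. bij_betw \<pi> {..<n} {..<n} \<and>
          \<sigma> = foldr (\<lambda>i acc. s (\<pi> i) \<otimes>\<^bsub>G\<^esub> acc) [0..<n] \<one>\<^bsub>G\<^esub>)"

text \<open>H_i = <s_k : k ~= i>; for i = -1 or i = n this is the whole group.\<close>
definition Hsub :: "('a, 'b) monoid_scheme \<Rightarrow> (nat \<Rightarrow> 'a) \<Rightarrow> nat \<Rightarrow> int \<Rightarrow> 'a set" where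
  "Hsub G s n i = generate G (s ` {k. k < n \<and> int k \<noteq> i})"

definition pchain :: "'f set \<Rightarrow> ('f \<Rightarrow> 'f \<Rightarrow> bool) \<Rightarrow> 'f set \<Rightarrow> bool" where
  "pchain Fs R C \<longleftrightarrow> C \<subseteq> Fs \<and> (\<forall>x\<in>C. \<forall>y\<in>C. R x y \<or> R y x)"

definition pflags :: "'f set \<Rightarrow> ('f \<Rightarrow> 'f \<Rightarrow> bool) \<Rightarrow> 'f set set" where
  "pflags Fs R = {C. pchain Fs R C \<and> (\<forall>D. pchain Fs R D \<and> C \<subseteq> D \<longrightarrow> D = C)}"

definition face_of_rank :: "('f \<Rightarrow> int) \<Rightarrow> 'f set \<Rightarrow> int \<Rightarrow> 'f" where
  "face_of_rank rk \<Phi> i = (THE x. x \<in> \<Phi> \<and> rk x = i)"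

definition polytope :: "'f set \<Rightarrow> ('f \<Rightarrow> 'f \<Rightarrow> bool) \<Rightarrow> ('f \<Rightarrow> int) \<Rightarrow> nat \<Rightarrow> bool" where
  "polytope Fs R rk n \<longleftrightarrow>
     (\<forall>x\<in>Fs. R x x) \<and>
     (\<forall>x\<in>Fs. \<forall>y\<in>Fs. R x y \<and> R y x \<longrightarrow> x = y) \<and>
     (\<forall>x\<in>Fs. \<forall>y\<in>Fs. \<forall>z\<in>Fs. R x y \<and> R y z \<longrightarrow> R x z) \<and>
     (\<forall>x\<in>Fs. -1 \<le> rk x \<and> rk x \<le> int n) \<and>
     (\<forall>x\<in>Fs. \<forall>y\<in>Fs. R x y \<and> x \<noteq> y \<longrightarrow> rk x < rk y) \<and>
     (\<exists>F0\<in>Fs. \<forall>x\<in>Fs. R F0 x) \<and>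
     (\<exists>Fn\<in>Fs. \<forall>x\<in>Fs. R x Fn) \<and>
     (\<forall>\<Phi>\<in>pflags Fs R. \<forall>i. -1 \<le> i \<and> i \<le> int n \<longrightarrow> (\<exists>!x. x \<in> \<Phi> \<and> rk x = i)) \<and>
     (\<forall>x\<in>Fs. \<forall>y\<in>Fs. R x y \<and> rk y = rk x + 2 \<longrightarrow>
        card {z\<in>Fs. R x z \<and> R z y \<and> z \<noteq> x \<and> z \<noteq> y} = 2) \<and>
     (\<forall>\<Phi>\<in>pflags Fs R. \<forall>\<Psi>\<in>pflags Fs R. \<exists>ls. ls \<noteq> [] \<and> hd ls = \<Phi> \<and> last ls = \<Psi> \<and>
        set ls \<subseteq> pflags Fs R \<and>
        (\<forall>k. k + 1 < length ls \<longrightarrow> card (ls ! k - ls ! (k + 1)) = 1) \<and>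
        (\<forall>\<Lambda>\<in>set ls. \<Phi> \<inter> \<Psi> \<subseteq> \<Lambda>))"

definition exch :: "'f set \<Rightarrow> ('f \<Rightarrow> 'f \<Rightarrow> bool) \<Rightarrow> ('f \<Rightarrow> int) \<Rightarrow> int \<Rightarrow> 'f set \<Rightarrow> 'f set" where
  "exch Fs R rk i \<Phi> =
     (THE \<Psi>. \<Psi> \<in> pflags Fs R \<and> \<Psi> \<noteq> \<Phi> \<and> (\<forall>x\<in>\<Phi>. rk x \<noteq> i \<longrightarrow> x \<in> \<Psi>))"

fun petrie_map :: "'f set \<Rightarrow> ('f \<Rightarrow> 'f \<Rightarrow> bool) \<Rightarrow> ('f \<Rightarrow> int) \<Rightarrow> (nat \<Rightarrow> nat) \<Rightarrow> nat \<Rightarrow> 'f set \<Rightarrow> 'f set" where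
  "petrie_map Fs R rk \<pi> 0 = id"
| "petrie_map Fs R rk \<pi> (Suc k) = exch Fs R rk (int (\<pi> k)) \<circ> petrie_map Fs R rk \<pi> k"

definition petrie_seq :: "'f set \<Rightarrow> ('f \<Rightarrow> 'f \<Rightarrow> bool) \<Rightarrow> ('f set \<Rightarrow> 'f set) \<Rightarrow> 'f set \<Rightarrow> int \<Rightarrow> 'f set" where
  "petrie_seq Fs R \<sigma> \<Phi> k =
     (if 0 \<le> k then (\<sigma> ^^ nat k) \<Phi> else (inv_into (pflags Fs R) \<sigma> ^^ nat (- k)) \<Phi>)"

text \<open>Acoptic Petrie schemes: no proper face occurs in two different positions
  (i.e. in two different pflags) of any Petrie sequence.\<close>
definition acoptic :: "'f set \<Rightarrow> ('f \<Rightarrow> 'f \<Rightarrow> bool) \<Rightarrow> ('f \<Rightarrow> int) \<Rightarrow> nat \<Rightarrow> bool" where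
  "acoptic Fs R rk n \<longleftrightarrow>
     (\<forall>\<pi>. bij_betw \<pi> {..<n} {..<n} \<longrightarrow>
       (\<forall>\<Phi>\<in>pflags Fs R. \<forall>a b :: int. \<forall>i :: int. 0 \<le> i \<and> i < int n \<longrightarrow>
          face_of_rank rk (petrie_seq Fs R (petrie_map Fs R rk \<pi> n) \<Phi> a) i =
          face_of_rank rk (petrie_seq Fs R (petrie_map Fs R rk \<pi> n) \<Phi> b) i \<longrightarrow>
          petrie_seq Fs R (petrie_map Fs R rk \<pi> n) \<Phi> a =
          petrie_seq Fs R (petrie_map Fs R rk \<pi> n) \<Phi> b))"

definition poset_aut :: "'f set \<Rightarrow> ('f \<Rightarrow> 'f \<Rightarrow> bool) \<Rightarrow> ('f \<Rightarrow> 'f) set" where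
  "poset_aut Fs R = {f. bij_betw f Fs Fs \<and> (\<forall>x\<in>Fs. \<forall>y\<in>Fs. R x y \<longleftrightarrow> R (f x) (f y))}"

definition flag_action :: "('a, 'b) monoid_scheme \<Rightarrow> (nat \<Rightarrow> 'a) \<Rightarrow> nat \<Rightarrow> 'f set \<Rightarrow>
    ('f \<Rightarrow> 'f \<Rightarrow> bool) \<Rightarrow> ('f \<Rightarrow> int) \<Rightarrow> ('f set \<Rightarrow> 'a \<Rightarrow> 'f set) \<Rightarrow> bool" where
  "flag_action G s n Fs R rk act \<longleftrightarrow>
     (\<forall>\<Psi>\<in>pflags Fs R. \<forall>g\<in>carrier G. act \<Psi> g \<in> pflags Fs R) \<and>
     (\<forall>\<Psi>\<in>pflags Fs R. act \<Psi> \<one>\<^bsub>G\<^esub> = \<Psi>) \<and>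
     (\<forall>\<Psi>\<in>pflags Fs R. \<forall>g\<in>carrier G. \<forall>h\<in>carrier G. act \<Psi> (g \<otimes>\<^bsub>G\<^esub> h) = act (act \<Psi> g) h) \<and>
     (\<forall>\<Psi>\<in>pflags Fs R. \<forall>i<n. act \<Psi> (s i) = exch Fs R rk (int i) \<Psi>)"

text \<open>Faces of rank i of P(W)/N: the orbits N w H_i (faces w H_i of P(W) modulo N).\<close>
definition qfaces :: "('a, 'b) monoid_scheme \<Rightarrow> (nat \<Rightarrow> 'a) \<Rightarrow> nat \<Rightarrow> 'a set \<Rightarrow> (int \<times> 'a set) set" where
  "qfaces G s n N = {(i, N <#>\<^bsub>G\<^esub> (w <#\<^bsub>G\<^esub> Hsub G s n i)) | i w. -1 \<le> i \<and> i \<le> int n \<and> w \<in> carrier G}"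

definition qle :: "int \<times> 'a set \<Rightarrow> int \<times> 'a set \<Rightarrow> bool" where
  "qle x y \<longleftrightarrow> fst x \<le> fst y \<and> snd x \<inter> snd y \<noteq> {}"

definition qflag :: "('a, 'b) monoid_scheme \<Rightarrow> (nat \<Rightarrow> 'a) \<Rightarrow> nat \<Rightarrow> 'a set \<Rightarrow> 'a \<Rightarrow> (int \<times> 'a set) set" where
  "qflag G s n N w = {(i, N <#>\<^bsub>G\<^esub> (w <#\<^bsub>G\<^esub> Hsub G s n i)) | i. -1 \<le> i \<and> i \<le> int n}"

end

theory Submission
  imports Defs
begin


lemma polD:
  assumes "polytope Fs R rk n"
  shows "\<forall>x\<in>Fs. R x x" "\<forall>x\<in>Fs. \<forall>y\<in>Fs. \<forall>z\<in>Fs. R x y \<and> R y z \<longrightarrow> R x z"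
    "\<forall>x\<in>Fs. -1 \<le> rk x \<and> rk x \<le> int n"
    "\<forall>x\<in>Fs. \<forall>y\<in>Fs. R x y \<and> x \<noteq> y \<longrightarrow> rk x < rk y"
    "\<forall>\<Phi>\<in>pflags Fs R. \<forall>i. -1 \<le> i \<and> i \<le> int n \<longrightarrow> (\<exists>!x. x \<in> \<Phi> \<and> rk x = i)"
    "\<forall>x\<in>Fs. \<forall>y\<in>Fs. R x y \<and> rk y = rk x + 2 \<longrightarrow>
        card {z\<in>Fs. R x z \<and> R z y \<and> z \<noteq> x \<and> z \<noteq> y} = 2"
proof -
  note A = assms[unfolded polytope_def]
  show "\<forall>x\<in>Fs. R x x" using A by (rule conjunct1)
  show "\<forall>x\<in>Fs. \<forall>y\<in>Fs. \<forall>z\<in>Fs. R x y \<and> R y z \<longrightarrow> R x z" using A[THEN conjunct2, THEN conjunct2] by (rule conjunct1)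
  show "\<forall>x\<in>Fs. -1 \<le> rk x \<and> rk x \<le> int n" using A[THEN conjunct2, THEN conjunct2, THEN conjunct2] by (rule conjunct1)
  show "\<forall>x\<in>Fs. \<forall>y\<in>Fs. R x y \<and> x \<noteq> y \<longrightarrow> rk x < rk y" using A[THEN conjunct2, THEN conjunct2, THEN conjunct2, THEN conjunct2] by (rule conjunct1)
  show "\<forall>\<Phi>\<in>pflags Fs R. \<forall>i. -1 \<le> i \<and> i \<le> int n \<longrightarrow> (\<exists>!x. x \<in> \<Phi> \<and> rk x = i)"
    using A[THEN conjunct2, THEN conjunct2, THEN conjunct2, THEN conjunct2, THEN conjunct2, THEN conjunct2, THEN conjunct2] by (rule conjunct1)
  show "\<forall>x\<in>Fs. \<forall>y\<in>Fs. R x y \<and> rk y = rk x + 2 \<longrightarrow>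
        card {z\<in>Fs. R x z \<and> R z y \<and> z \<noteq> x \<and> z \<noteq> y} = 2"
    using A[THEN conjunct2, THEN conjunct2, THEN conjunct2, THEN conjunct2, THEN conjunct2, THEN conjunct2, THEN conjunct2, THEN conjunct2] by (rule conjunct1)
qed

lemma pol_refl: "polytope Fs R rk n \<Longrightarrow> x \<in> Fs \<Longrightarrow> R x x"
  using polD(1) by blast
lemma pol_trans: "polytope Fs R rk n \<Longrightarrow> x\<in>Fs \<Longrightarrow> y\<in>Fs \<Longrightarrow> z\<in>Fs \<Longrightarrow> R x y \<Longrightarrow> R y z \<Longrightarrow> R x z"
  using polD(2) by blast
lemma pol_rank: "polytope Fs R rk n \<Longrightarrow> x\<in>Fs \<Longrightarrow> -1 \<le> rk x \<and> rk x \<le> int n"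
  using polD(3) by blast
lemma pol_strict: "polytope Fs R rk n \<Longrightarrow> x\<in>Fs \<Longrightarrow> y\<in>Fs \<Longrightarrow> R x y \<Longrightarrow> x\<noteq>y \<Longrightarrow> rk x < rk y"
  using polD(4) by blast
lemma pol_flag_rank: "polytope Fs R rk n \<Longrightarrow> \<Phi> \<in> pflags Fs R \<Longrightarrow> -1 \<le> i \<Longrightarrow> i \<le> int n \<Longrightarrow> \<exists>!x. x\<in>\<Phi> \<and> rk x = i"
  using polD(5) by blast
lemma pol_diamond: "polytope Fs R rk n \<Longrightarrow> x\<in>Fs \<Longrightarrow> y\<in>Fs \<Longrightarrow> R x y \<Longrightarrow> rk y = rk x + 2 \<Longrightarrow>
   card {z\<in>Fs. R x z \<and> R z y \<and> z \<noteq> x \<and> z \<noteq> y} = 2"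
  using polD(6) by blast

lemma flag_sub: "\<Phi> \<in> pflags Fs R \<Longrightarrow> \<Phi> \<subseteq> Fs"
  unfolding pflags_def pchain_def by blast
lemma flag_chain: "\<Phi> \<in> pflags Fs R \<Longrightarrow> pchain Fs R \<Phi>"
  unfolding pflags_def by blast
lemma flag_cmp: "\<Phi> \<in> pflags Fs R \<Longrightarrow> x\<in>\<Phi> \<Longrightarrow> y\<in>\<Phi> \<Longrightarrow> R x y \<or> R y x"
  unfolding pflags_def pchain_def by blast
lemma flag_max: "\<Phi> \<in> pflags Fs R \<Longrightarrow> pchain Fs R D \<Longrightarrow> \<Phi> \<subseteq> D \<Longrightarrow> D = \<Phi>"
  unfolding pflags_def by blast

lemma chain_full_max:
  assumes P: "polytope Fs R rk n" and C: "pchain Fs R C"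
    and full: "\<And>r. -1 \<le> r \<Longrightarrow> r \<le> int n \<Longrightarrow> \<exists>e\<in>C. rk e = r"
  shows "C \<in> pflags Fs R"
  unfolding pflags_def
proof (intro CollectI conjI allI impI C)
  fix D assume D: "pchain Fs R D \<and> C \<subseteq> D"
  show "D = C"
  proof
    show "D \<subseteq> C"
    proof
      fix d assume d: "d \<in> D"
      have dF: "d \<in> Fs" using D d unfolding pchain_def by blast
      obtain e where e: "e \<in> C" "rk e = rk d" using full pol_rank[OF P dF] by blast
      have eD: "e \<in> D" "e \<in> Fs" using e D C unfolding pchain_def by blast+
      have "R d e \<or> R e d" using D d eD unfolding pchain_def by blast
      hence "d = e" using pol_strict[OF P dF eD(2)] pol_strict[OF P eD(2) dF] e by force
      thus "d \<in> C" using e by simp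
    qed
  qed (use D in blast)
qed

lemma flag_same_rank: "polytope Fs R rk n \<Longrightarrow> \<Phi> \<in> pflags Fs R \<Longrightarrow> x\<in>\<Phi> \<Longrightarrow> y\<in>\<Phi> \<Longrightarrow> rk x = rk y \<Longrightarrow> x = y"
  by (metis flag_cmp flag_sub less_irrefl pol_strict subsetD)

lemma flag_below: "polytope Fs R rk n \<Longrightarrow> \<Phi> \<in> pflags Fs R \<Longrightarrow> a\<in>\<Phi> \<Longrightarrow> b\<in>\<Phi> \<Longrightarrow> rk a < rk b \<Longrightarrow> R a b"
  by (metis flag_cmp flag_sub not_less_iff_gr_or_eq pol_strict subsetD)

lemma flag_rank_obtain:
  assumes "polytope Fs R rk n" "\<Phi> \<in> pflags Fs R" "-1 \<le> i" "i \<le> int n"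
  obtains x where "x \<in> \<Phi>" "rk x = i"
  using pol_flag_rank[OF assms] by blast

lemma exch_shape:
  assumes P: "polytope Fs R rk n" and Psi: "\<Psi> \<in> pflags Fs R" and i: "0 \<le> i" "i < int n"
    and x: "x \<in> \<Psi>" "rk x = i - 1" and y: "y \<in> \<Psi>" "rk y = i + 1" and z: "z \<in> \<Psi>" "rk z = i"
    and Psi': "\<Psi>' \<in> pflags Fs R" "\<Psi>' \<noteq> \<Psi>" "\<forall>a\<in>\<Psi>. rk a \<noteq> i \<longrightarrow> a \<in> \<Psi>'"
    and z': "z' \<in> \<Psi>'" "rk z' = i"
  shows "z' \<noteq> z" "z' \<in> {w\<in>Fs. R x w \<and> R w y \<and> w \<noteq> x \<and> w \<noteq> y}" "\<Psi>' = (\<Psi> - {z}) \<union> {z'}"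
proof -
  show "z' \<noteq> z"
  proof
    assume "z' = z"
    have "\<Psi> \<subseteq> \<Psi>'"
    proof
      fix a assume a: "a \<in> \<Psi>"
      show "a \<in> \<Psi>'"
      proof (cases "rk a = i")
        case True
        then have "a = z" using flag_same_rank[OF P Psi a z(1)] z by simp
        then show ?thesis using z' \<open>z' = z\<close> by simp
      qed (use Psi' a in blast)
    qed
    then have "\<Psi>' = \<Psi>" using flag_max[OF Psi flag_chain[OF Psi'(1)]] by simp
    then show False using Psi' by simp
  qed
  have xP: "x \<in> \<Psi>'" "y \<in> \<Psi>'" using Psi'(3) x y by auto
  have z'F: "z' \<in> Fs" using flag_sub[OF Psi'(1)] z' by blast
  show "z' \<in> {w\<in>Fs. R x w \<and> R w y \<and> w \<noteq> x \<and> w \<noteq> y}"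
    using flag_below[OF P Psi'(1) xP(1) z'(1)] flag_below[OF P Psi'(1) z'(1) xP(2)] x y z' z'F by auto
  show "\<Psi>' = (\<Psi> - {z}) \<union> {z'}"
  proof
    show "\<Psi>' \<subseteq> \<Psi> - {z} \<union> {z'}"
    proof
      fix e assume e: "e \<in> \<Psi>'"
      have r: "-1 \<le> rk e" "rk e \<le> int n" using pol_rank[OF P] flag_sub[OF Psi'(1)] e by blast+
      show "e \<in> \<Psi> - {z} \<union> {z'}"
      proof (cases "rk e = i")
        case True
        then show ?thesis using flag_same_rank[OF P Psi'(1) e z'(1)] z' by simp
      next
        case False
        obtain e' where e': "e' \<in> \<Psi>" "rk e' = rk e" using flag_rank_obtain[OF P Psi r] by blast
        have e'P: "e' \<in> \<Psi>'" using Psi'(3) e' False by auto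
        have "e' = e" using flag_same_rank[OF P Psi'(1) e'P e] e'(2) by simp
        then show ?thesis using e' False z by auto
      qed
    qed
    show "\<Psi> - {z} \<union> {z'} \<subseteq> \<Psi>'"
    proof
      fix e assume e: "e \<in> \<Psi> - {z} \<union> {z'}"
      show "e \<in> \<Psi>'"
      proof (cases "e = z'")
        case True then show ?thesis using z' by simp
      next
        case False
        then have e1: "e \<in> \<Psi>" "e \<noteq> z" using e by auto
        have "rk e \<noteq> i"
        proof
          assume "rk e = i"
          then have "e = z" using flag_same_rank[OF P Psi e1(1) z(1)] z(2) by simp
          then show False using e1 by simp
        qed
        then show ?thesis using Psi'(3) e1 by blast
      qed
    qed
  qed
qed

lemma exch_unique:
  assumes P: "polytope Fs R rk n" and Psi: "\<Psi> \<in> pflags Fs R" and i: "0 \<le> i" "i < int n"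
    and A: "\<Psi>1 \<in> pflags Fs R" "\<Psi>1 \<noteq> \<Psi>" "\<forall>a\<in>\<Psi>. rk a \<noteq> i \<longrightarrow> a \<in> \<Psi>1"
    and B: "\<Psi>2 \<in> pflags Fs R" "\<Psi>2 \<noteq> \<Psi>" "\<forall>a\<in>\<Psi>. rk a \<noteq> i \<longrightarrow> a \<in> \<Psi>2"
  shows "\<Psi>1 = \<Psi>2"
proof -
  obtain x where x: "x \<in> \<Psi>" "rk x = i - 1" using flag_rank_obtain[OF P Psi, of "i-1"] i by auto
  obtain y where y: "y \<in> \<Psi>" "rk y = i + 1" using flag_rank_obtain[OF P Psi, of "i+1"] i by auto
  obtain z where z: "z \<in> \<Psi>" "rk z = i" using flag_rank_obtain[OF P Psi, of "i"] i by auto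
  obtain z1 where z1: "z1 \<in> \<Psi>1" "rk z1 = i" using flag_rank_obtain[OF P A(1), of "i"] i by auto
  obtain z2 where z2: "z2 \<in> \<Psi>2" "rk z2 = i" using flag_rank_obtain[OF P B(1), of "i"] i by auto
  note s1 = exch_shape[OF P Psi i x y z A z1]
  note s2 = exch_shape[OF P Psi i x y z B z2]
  let ?D = "{w\<in>Fs. R x w \<and> R w y \<and> w \<noteq> x \<and> w \<noteq> y}"
  have xF: "x \<in> Fs" "y \<in> Fs" "z \<in> Fs" using flag_sub[OF Psi] x y z by auto
  have cD: "card ?D = 2" using pol_diamond[OF P xF(1) xF(2)] flag_below[OF P Psi x(1) y(1)] x y by auto
  have zD: "z \<in> ?D" using flag_below[OF P Psi x(1) z(1)] flag_below[OF P Psi z(1) y(1)] x y z xF by auto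
  have "z1 = z2"
  proof (rule ccontr)
    assume ne: "z1 \<noteq> z2"
    have "{z, z1, z2} \<subseteq> ?D" using zD s1 s2 by auto
    moreover have fD: "finite ?D"
    proof (rule ccontr)
      assume "infinite ?D"
      then have "card ?D = 0" by (rule card.infinite)
      then show False using cD by simp
    qed
    ultimately have "card {z, z1, z2} \<le> card ?D" by (intro card_mono)
    then have "card {z, z1, z2} \<le> 2" using cD by simp
    moreover have "card {z, z1, z2} = 3" using ne s1(1) s2(1) by auto
    ultimately show False by simp
  qed
  then show ?thesis using s1(3) s2(3) by simp
qed

lemma exch_exists:
  assumes P: "polytope Fs R rk n" and Psi: "\<Psi> \<in> pflags Fs R" and i: "0 \<le> i" "i < int n"
  shows "\<exists>\<Psi>'. \<Psi>' \<in> pflags Fs R \<and> \<Psi>' \<noteq> \<Psi> \<and> (\<forall>a\<in>\<Psi>. rk a \<noteq> i \<longrightarrow> a \<in> \<Psi>')"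
proof -
  obtain x where x: "x \<in> \<Psi>" "rk x = i - 1" using flag_rank_obtain[OF P Psi, of "i-1"] i by auto
  obtain y where y: "y \<in> \<Psi>" "rk y = i + 1" using flag_rank_obtain[OF P Psi, of "i+1"] i by auto
  obtain z where z: "z \<in> \<Psi>" "rk z = i" using flag_rank_obtain[OF P Psi, of "i"] i by auto
  let ?D = "{w\<in>Fs. R x w \<and> R w y \<and> w \<noteq> x \<and> w \<noteq> y}"
  have xF: "x \<in> Fs" "y \<in> Fs" "z \<in> Fs" using flag_sub[OF Psi] x y z by auto
  have cD: "card ?D = 2" using pol_diamond[OF P xF(1) xF(2)] flag_below[OF P Psi x(1) y(1)] x y by auto
  have zD: "z \<in> ?D" using flag_below[OF P Psi x(1) z(1)] flag_below[OF P Psi z(1) y(1)] x y z xF by auto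
  obtain z' where z': "z' \<in> ?D" "z' \<noteq> z"
  proof -
    have "?D \<noteq> {z}"
    proof
      assume "?D = {z}"
      then have "card ?D = 1" by simp
      then show False using cD by simp
    qed
    then show ?thesis using zD that by blast
  qed
  have z'F: "z' \<in> Fs" "R x z'" "R z' y" using z' by auto
  have rz': "rk z' = i"
    using pol_strict[OF P xF(1) z'F(1) z'F(2)] pol_strict[OF P z'F(1) xF(2) z'F(3)] z' x y by auto
  let ?P = "(\<Psi> - {z}) \<union> {z'}"
  have ch: "pchain Fs R ?P"
    unfolding pchain_def
  proof (intro conjI ballI)
    show "?P \<subseteq> Fs" using flag_sub[OF Psi] z'F by auto
    have key: "R e z' \<or> R z' e" if e: "e \<in> \<Psi> - {z}" for e
    proof -
      have eF: "e \<in> Fs" using e flag_sub[OF Psi] by auto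
      have ne: "rk e \<noteq> i"
      proof
        assume "rk e = i"
        moreover have eP: "e \<in> \<Psi>" using e by simp
        ultimately have "e = z" using flag_same_rank[OF P Psi eP z(1)] z(2) by simp
        then show False using e by simp
      qed
      show ?thesis
      proof (cases "rk e < i")
        case True
        have "R e x"
        proof (cases "e = x")
          case True then show ?thesis using pol_refl[OF P eF] by simp
        next
          case False
          have "rk e \<noteq> rk x"
          proof
            assume "rk e = rk x"
            moreover have eP: "e \<in> \<Psi>" using e by simp
            ultimately have "e = x" using flag_same_rank[OF P Psi eP x(1)] by simp
            then show False using False by simp
          qed
          then have "rk e < rk x" using x(2) True by simp
          then show ?thesis using flag_below[OF P Psi _ x(1)] e by auto
        qed
        then show ?thesis using pol_trans[OF P eF xF(1) z'F(1)] z'F by blast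
      next
        case False
        have "R y e"
        proof (cases "e = y")
          case True then show ?thesis using pol_refl[OF P eF] by simp
        next
          case False
          have "rk e \<noteq> rk y"
          proof
            assume "rk e = rk y"
            moreover have eP: "e \<in> \<Psi>" using e by simp
            ultimately have "e = y" using flag_same_rank[OF P Psi eP y(1)] by simp
            then show False using False by simp
          qed
          then have "rk y < rk e" using y(2) \<open>\<not> rk e < i\<close> ne by simp
          then show ?thesis using flag_below[OF P Psi y(1)] e by auto
        qed
        then show ?thesis using pol_trans[OF P z'F(1) xF(2) eF] z'F by blast
      qed
    qed
    fix a b assume a: "a \<in> ?P" and b: "b \<in> ?P"
    show "R a b \<or> R b a"
      using a b key flag_cmp[OF Psi] pol_refl[OF P z'F(1)] by blast
  qed
  have fl: "?P \<in> pflags Fs R"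
  proof (rule chain_full_max[OF P ch])
    fix r assume r: "-1 \<le> r" "r \<le> int n"
    show "\<exists>e\<in>?P. rk e = r"
    proof (cases "r = i")
      case True then show ?thesis using rz' by auto
    next
      case False
      obtain e where "e \<in> \<Psi>" "rk e = r" using flag_rank_obtain[OF P Psi r] by blast
      then show ?thesis using False z by auto
    qed
  qed
  have "z' \<notin> \<Psi>"
  proof
    assume zP: "z' \<in> \<Psi>"
    then have "z' = z" using flag_same_rank[OF P Psi zP z(1)] z(2) rz' by simp
    then show False using z' by simp
  qed
  then have "?P \<noteq> \<Psi>" by auto
  moreover have "\<forall>a\<in>\<Psi>. rk a \<noteq> i \<longrightarrow> a \<in> ?P" using z by auto
  ultimately show ?thesis using fl by blast
qed

lemma exch_prop:
  assumes P: "polytope Fs R rk n" and Psi: "\<Psi> \<in> pflags Fs R" and i: "0 \<le> i" "i < int n"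
  shows "exch Fs R rk i \<Psi> \<in> pflags Fs R \<and> exch Fs R rk i \<Psi> \<noteq> \<Psi> \<and> (\<forall>a\<in>\<Psi>. rk a \<noteq> i \<longrightarrow> a \<in> exch Fs R rk i \<Psi>)"
proof -
  have "\<exists>!\<Psi>'. \<Psi>' \<in> pflags Fs R \<and> \<Psi>' \<noteq> \<Psi> \<and> (\<forall>a\<in>\<Psi>. rk a \<noteq> i \<longrightarrow> a \<in> \<Psi>')"
    using exch_exists[OF P Psi i] exch_unique[OF P Psi i] by blast
  then show ?thesis unfolding exch_def by (rule theI')
qed

lemma exch_eq:
  assumes P: "polytope Fs R rk n" and Psi: "\<Psi> \<in> pflags Fs R" and i: "0 \<le> i" "i < int n"
    and A: "\<Psi>1 \<in> pflags Fs R" "\<Psi>1 \<noteq> \<Psi>" "\<forall>a\<in>\<Psi>. rk a \<noteq> i \<longrightarrow> a \<in> \<Psi>1"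
  shows "exch Fs R rk i \<Psi> = \<Psi>1"
  using exch_unique[OF P Psi i _ _ _ A] exch_prop[OF P Psi i] by blast




lemma aut_facts:
  assumes "f \<in> poset_aut Fs R"
  shows "bij_betw f Fs Fs" "inj_on f Fs" "f ` Fs = Fs" "\<And>x y. x\<in>Fs \<Longrightarrow> y\<in>Fs \<Longrightarrow> R x y \<longleftrightarrow> R (f x) (f y)"
  using assms unfolding poset_aut_def bij_betw_def by auto

lemma aut_flag:
  assumes f: "f \<in> poset_aut Fs R" and Psi: "\<Psi> \<in> pflags Fs R"
  shows "f ` \<Psi> \<in> pflags Fs R"
proof -
  note A = aut_facts[OF f]
  have sub: "\<Psi> \<subseteq> Fs" using flag_sub[OF Psi] .
  have ch: "pchain Fs R (f ` \<Psi>)"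
    unfolding pchain_def
  proof (intro conjI ballI)
    show "f ` \<Psi> \<subseteq> Fs" using sub A(3) by blast
    fix a b assume a: "a \<in> f ` \<Psi>" and b: "b \<in> f ` \<Psi>"
    then obtain x y where xy: "x \<in> \<Psi>" "y \<in> \<Psi>" "a = f x" "b = f y" by blast
    have xyF: "x \<in> Fs" "y \<in> Fs" using xy sub by auto
    have "R x y \<or> R y x" using flag_cmp[OF Psi xy(1) xy(2)] .
    then show "R a b \<or> R b a" using A(4)[OF xyF] A(4)[OF xyF(2) xyF(1)] xy by blast
  qed
  show ?thesis unfolding pflags_def
  proof (intro CollectI conjI allI impI ch)
    fix D assume D: "pchain Fs R D \<and> f ` \<Psi> \<subseteq> D"
    let ?D' = "{x\<in>Fs. f x \<in> D}"
    have "pchain Fs R ?D'"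
      unfolding pchain_def
    proof (intro conjI ballI)
      show "?D' \<subseteq> Fs" by blast
      fix a b assume a: "a \<in> ?D'" and b: "b \<in> ?D'"
      then have "R (f a) (f b) \<or> R (f b) (f a)" using D unfolding pchain_def by blast
      moreover have "a \<in> Fs" "b \<in> Fs" using a b by auto
      ultimately show "R a b \<or> R b a" using A(4)[of a b] A(4)[of b a] by blast
    qed
    moreover have "\<Psi> \<subseteq> ?D'" using sub D by auto
    ultimately have eq: "?D' = \<Psi>" using flag_max[OF Psi] by blast
    show "D = f ` \<Psi>"
    proof
      show "D \<subseteq> f ` \<Psi>"
      proof
        fix d assume d: "d \<in> D"
        then have "d \<in> Fs" using D unfolding pchain_def by blast
        then obtain x where "x \<in> Fs" "d = f x" using A(3) by blast
        then show "d \<in> f ` \<Psi>" using eq d by blast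
      qed
    qed (use D in blast)
  qed
qed

lemma flag_count:
  assumes P: "polytope Fs R rk n" and Psi: "\<Psi> \<in> pflags Fs R" and x: "x \<in> \<Psi>"
  shows "card {y\<in>\<Psi>. R y x \<and> y \<noteq> x} = nat (rk x + 1)"
proof -
  have sub: "\<Psi> \<subseteq> Fs" using flag_sub[OF Psi] .
  have eq: "{y\<in>\<Psi>. R y x \<and> y \<noteq> x} = {y\<in>\<Psi>. rk y < rk x}"
    using pol_strict[OF P] flag_below[OF P Psi _ x] sub x by auto
  have rx: "-1 \<le> rk x" using pol_rank[OF P] sub x by auto
  have "bij_betw rk {y\<in>\<Psi>. rk y < rk x} {-1..<rk x}"
    unfolding bij_betw_def
  proof
    show "inj_on rk {y \<in> \<Psi>. rk y < rk x}"
    proof (rule inj_onI)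
      fix a b assume "a \<in> {y \<in> \<Psi>. rk y < rk x}" "b \<in> {y \<in> \<Psi>. rk y < rk x}" "rk a = rk b"
      then show "a = b" using flag_same_rank[OF P Psi, of a b] by simp
    qed
    show "rk ` {y \<in> \<Psi>. rk y < rk x} = {-1..<rk x}"
    proof
      show "rk ` {y \<in> \<Psi>. rk y < rk x} \<subseteq> {-1..<rk x}" using pol_rank[OF P] sub by auto
      show "{-1..<rk x} \<subseteq> rk ` {y \<in> \<Psi>. rk y < rk x}"
      proof
        fix r assume r: "r \<in> {-1..<rk x}"
        have "x \<in> Fs" using sub x by blast
        then have "rk x \<le> int n" using pol_rank[OF P] by blast
        then have "r \<le> int n" using r by simp
        then obtain y where "y \<in> \<Psi>" "rk y = r" using flag_rank_obtain[OF P Psi] r by auto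
        then show "r \<in> rk ` {y \<in> \<Psi>. rk y < rk x}" using r by auto
      qed
    qed
  qed
  then have "card {y\<in>\<Psi>. rk y < rk x} = card {-1..<rk x}" by (rule bij_betw_same_card)
  then show ?thesis using eq by simp
qed

lemma aut_rank:
  assumes P: "polytope Fs R rk n" and f: "f \<in> poset_aut Fs R" and Psi: "\<Psi> \<in> pflags Fs R" and x: "x \<in> \<Psi>"
  shows "rk (f x) = rk x"
proof -
  note A = aut_facts[OF f]
  have sub: "\<Psi> \<subseteq> Fs" using flag_sub[OF Psi] .
  have fP: "f ` \<Psi> \<in> pflags Fs R" by (rule aut_flag[OF f Psi])
  have xF: "x \<in> Fs" using sub x by blast
  have img: "f ` {y\<in>\<Psi>. R y x \<and> y \<noteq> x} = {y\<in>f ` \<Psi>. R y (f x) \<and> y \<noteq> f x}"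
  proof
    show "f ` {y\<in>\<Psi>. R y x \<and> y \<noteq> x} \<subseteq> {y\<in>f ` \<Psi>. R y (f x) \<and> y \<noteq> f x}"
    proof
      fix a assume "a \<in> f ` {y\<in>\<Psi>. R y x \<and> y \<noteq> x}"
      then obtain y where y: "y \<in> \<Psi>" "R y x" "y \<noteq> x" "a = f y" by blast
      have yF: "y \<in> Fs" using y sub by blast
      have "R (f y) (f x)" using A(4)[OF yF xF] y by blast
      moreover have "f y \<noteq> f x" using A(2) yF xF y(3) unfolding inj_on_def by blast
      ultimately show "a \<in> {y\<in>f ` \<Psi>. R y (f x) \<and> y \<noteq> f x}" using y(1,4) by auto
    qed
    show "{y\<in>f ` \<Psi>. R y (f x) \<and> y \<noteq> f x} \<subseteq> f ` {y\<in>\<Psi>. R y x \<and> y \<noteq> x}"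
    proof
      fix a assume "a \<in> {y\<in>f ` \<Psi>. R y (f x) \<and> y \<noteq> f x}"
      then obtain y where y: "y \<in> \<Psi>" "R (f y) (f x)" "f y \<noteq> f x" "a = f y" by blast
      have yF: "y \<in> Fs" using y sub by blast
      have "R y x" using A(4)[OF yF xF] y by blast
      moreover have "y \<noteq> x" using y(3) by blast
      ultimately show "a \<in> f ` {y\<in>\<Psi>. R y x \<and> y \<noteq> x}" using y(1,4) by auto
    qed
  qed
  have "card {y\<in>\<Psi>. R y x \<and> y \<noteq> x} = card (f ` {y\<in>\<Psi>. R y x \<and> y \<noteq> x})"
    by (rule card_image[symmetric], rule inj_on_subset[OF A(2)]) (use sub in blast)
  then have "nat (rk x + 1) = nat (rk (f x) + 1)"
    using flag_count[OF P Psi x] flag_count[OF P fP] img x by simp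
  moreover have "f x \<in> Fs" using A(3) xF by blast
  then have "-1 \<le> rk x" "-1 \<le> rk (f x)" using pol_rank[OF P] xF by blast+
  ultimately show ?thesis by simp
qed

lemma face_of_rank_eq:
  assumes P: "polytope Fs R rk n" and Psi: "\<Psi> \<in> pflags Fs R" and x: "x \<in> \<Psi>" "rk x = i"
  shows "face_of_rank rk \<Psi> i = x"
proof -
  have r: "-1 \<le> i" "i \<le> int n" using pol_rank[OF P] flag_sub[OF Psi] x by auto
  show ?thesis unfolding face_of_rank_def
    using pol_flag_rank[OF P Psi r] x by (auto intro: the_equality)
qed

lemma face_of_rank_in:
  assumes P: "polytope Fs R rk n" and Psi: "\<Psi> \<in> pflags Fs R" and r: "-1 \<le> i" "i \<le> int n"
  shows "face_of_rank rk \<Psi> i \<in> \<Psi> \<and> rk (face_of_rank rk \<Psi> i) = i"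
  using face_of_rank_eq[OF P Psi] flag_rank_obtain[OF P Psi r] by metis

lemma aut_face:
  assumes P: "polytope Fs R rk n" and f: "f \<in> poset_aut Fs R" and Psi: "\<Psi> \<in> pflags Fs R"
    and r: "-1 \<le> i" "i \<le> int n"
  shows "face_of_rank rk (f ` \<Psi>) i = f (face_of_rank rk \<Psi> i)"
proof -
  note F = face_of_rank_in[OF P Psi r]
  show ?thesis
    by (rule face_of_rank_eq[OF P aut_flag[OF f Psi]]) (use F aut_rank[OF P f Psi] in auto)
qed

lemma aut_exch:
  assumes P: "polytope Fs R rk n" and f: "f \<in> poset_aut Fs R" and Psi: "\<Psi> \<in> pflags Fs R"
    and i: "0 \<le> i" "i < int n"
  shows "f ` (exch Fs R rk i \<Psi>) = exch Fs R rk i (f ` \<Psi>)"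
proof -
  note A = aut_facts[OF f]
  note E = exch_prop[OF P Psi i]
  have s1: "\<Psi> \<subseteq> Fs" "exch Fs R rk i \<Psi> \<subseteq> Fs" using flag_sub[OF Psi] flag_sub[of "exch Fs R rk i \<Psi>" Fs R] E by blast+
  show ?thesis
  proof (rule exch_eq[OF P aut_flag[OF f Psi] i, symmetric])
    show "f ` exch Fs R rk i \<Psi> \<in> pflags Fs R" using aut_flag[OF f] E by blast
    show "f ` exch Fs R rk i \<Psi> \<noteq> f ` \<Psi>" using inj_on_image_eq_iff[OF A(2) s1(2) s1(1)] E by blast
    show "\<forall>a\<in>f ` \<Psi>. rk a \<noteq> i \<longrightarrow> a \<in> f ` exch Fs R rk i \<Psi>"
      using aut_rank[OF P f Psi] E by auto
  qed
qed




locale setting =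
  fixes G (structure) and s :: "nat \<Rightarrow> 'a" and n :: nat and N :: "'a set"
    and act :: "(int \<times> 'a set) set \<Rightarrow> 'a \<Rightarrow> (int \<times> 'a set) set"
  assumes Wstr: "string_C_group G s n"
    and Nsub: "subgroup N G"
    and Qpoly: "polytope (qfaces G s n N) qle fst n"
    and Qact: "flag_action G s n (qfaces G s n N) qle fst act"
    and Nstab: "N = {g \<in> carrier G. act (qflag G s n N \<one>) g = qflag G s n N \<one>}"
begin

abbreviation "Fs \<equiv> qfaces G s n N"
abbreviation "FL \<equiv> pflags Fs qle"
abbreviation "\<Phi>0 \<equiv> qflag G s n N \<one>"
abbreviation "H i \<equiv> Hsub G s n i"

lemma WD: "group G" "\<forall>i<n. s i \<in> carrier G \<and> s i \<noteq> \<one> \<and> s i \<otimes> s i = \<one>"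
  "generate G (s ` {..<n}) = carrier G"
proof -
  note A = Wstr[unfolded string_C_group_def]
  show "group G" using A by (rule conjunct1)
  show "\<forall>i<n. s i \<in> carrier G \<and> s i \<noteq> \<one> \<and> s i \<otimes> s i = \<one>" using A[THEN conjunct2] by (rule conjunct1)
  show "generate G (s ` {..<n}) = carrier G" using A[THEN conjunct2, THEN conjunct2, THEN conjunct2] by (rule conjunct1)
qed

lemma grp: "group G" by (rule WD(1))

sublocale group G by (rule grp)

lemma s_car: "i < n \<Longrightarrow> s i \<in> carrier G" using WD(2) by blast
lemma s_sq: "i < n \<Longrightarrow> s i \<otimes> s i = \<one>" using WD(2) by blast
lemma s_inv: "i < n \<Longrightarrow> inv (s i) = s i" using inv_equality[OF s_sq s_car s_car] by simp
lemma gen: "carrier G = generate G (s ` {..<n})" using WD(3) by simp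
lemma S_sub: "A \<subseteq> {..<n} \<Longrightarrow> s ` A \<subseteq> carrier G" using s_car by auto
lemma H_subgroup: "subgroup (H i) G"
  unfolding Hsub_def by (rule generate_is_subgroup) (rule S_sub, auto)
lemma s_in_H: "k < n \<Longrightarrow> int k \<noteq> j \<Longrightarrow> s k \<in> H j"
  unfolding Hsub_def by (rule generate.incl) auto

lemma nstab: "m \<in> N \<Longrightarrow> act \<Phi>0 m = \<Phi>0"
proof -
  assume "m \<in> N"
  then have "m \<in> {g \<in> carrier G. act \<Phi>0 g = \<Phi>0}" by (rule iffD1[OF Nstab[THEN eqset_imp_iff]])
  then show ?thesis by blast
qed

lemma actD: "\<forall>\<Psi>\<in>FL. \<forall>g\<in>carrier G. act \<Psi> g \<in> FL" "\<forall>\<Psi>\<in>FL. act \<Psi> \<one> = \<Psi>"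
  "\<forall>\<Psi>\<in>FL. \<forall>g\<in>carrier G. \<forall>h\<in>carrier G. act \<Psi> (g \<otimes> h) = act (act \<Psi> g) h"
  "\<forall>\<Psi>\<in>FL. \<forall>i<n. act \<Psi> (s i) = exch Fs qle fst (int i) \<Psi>"
proof -
  note A = Qact[unfolded flag_action_def]
  show "\<forall>\<Psi>\<in>FL. \<forall>g\<in>carrier G. act \<Psi> g \<in> FL" using A by (rule conjunct1)
  show "\<forall>\<Psi>\<in>FL. act \<Psi> \<one> = \<Psi>" using A[THEN conjunct2] by (rule conjunct1)
  show "\<forall>\<Psi>\<in>FL. \<forall>g\<in>carrier G. \<forall>h\<in>carrier G. act \<Psi> (g \<otimes> h) = act (act \<Psi> g) h"
    using A[THEN conjunct2, THEN conjunct2] by (rule conjunct1)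
  show "\<forall>\<Psi>\<in>FL. \<forall>i<n. act \<Psi> (s i) = exch Fs qle fst (int i) \<Psi>"
    using A[THEN conjunct2, THEN conjunct2] by (rule conjunct2)
qed
lemma act_flag: "\<Psi> \<in> FL \<Longrightarrow> g \<in> carrier G \<Longrightarrow> act \<Psi> g \<in> FL"
  using actD(1) by blast
lemma act_one: "\<Psi> \<in> FL \<Longrightarrow> act \<Psi> \<one> = \<Psi>"
  using actD(2) by blast
lemma act_mult: "\<Psi> \<in> FL \<Longrightarrow> g \<in> carrier G \<Longrightarrow> h \<in> carrier G \<Longrightarrow> act \<Psi> (g \<otimes> h) = act (act \<Psi> g) h"
  using actD(3) by blast
lemma act_s: "\<Psi> \<in> FL \<Longrightarrow> i < n \<Longrightarrow> act \<Psi> (s i) = exch Fs qle fst (int i) \<Psi>"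
  using actD(4) by blast

lemma aut_act_gen:
  assumes "g \<in> generate G (s ` {..<n})" and f: "f \<in> poset_aut Fs qle"
  shows "\<Psi> \<in> FL \<Longrightarrow> f ` (act \<Psi> g) = act (f ` \<Psi>) g"
  using assms(1)
proof (induction arbitrary: \<Psi>)
  case one
  then show ?case using act_one aut_flag[OF f] by simp
next
  case (incl h)
  then obtain k where k: "k < n" "h = s k" by auto
  then show ?case using act_s incl aut_flag[OF f] aut_exch[OF Qpoly f, of \<Psi> "int k"] by simp
next
  case (inv h)
  then obtain k where k: "k < n" "h = s k" by auto
  then show ?case using act_s inv aut_flag[OF f] aut_exch[OF Qpoly f, of \<Psi> "int k"] s_inv by simp
next
  case (eng h1 h2)
  have c: "h1 \<in> carrier G" "h2 \<in> carrier G" using eng gen by auto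
  have "f ` act \<Psi> (h1 \<otimes> h2) = f ` act (act \<Psi> h1) h2" using act_mult eng c by simp
  also have "\<dots> = act (f ` act \<Psi> h1) h2" using eng.IH(2) act_flag eng c by simp
  also have "\<dots> = act (act (f ` \<Psi>) h1) h2" using eng.IH(1) eng by simp
  also have "\<dots> = act (f ` \<Psi>) (h1 \<otimes> h2)" using act_mult aut_flag[OF f] eng c by simp
  finally show ?case .
qed

lemma aut_act: "f \<in> poset_aut Fs qle \<Longrightarrow> \<Psi> \<in> FL \<Longrightarrow> g \<in> carrier G \<Longrightarrow> f ` (act \<Psi> g) = act (f ` \<Psi>) g"
  using aut_act_gen gen by blast

lemma act_keep:
  assumes "h \<in> generate G (s ` {k. k < n \<and> int k \<noteq> i})"
  shows "\<Psi> \<in> FL \<Longrightarrow> x \<in> \<Psi> \<Longrightarrow> fst x = i \<Longrightarrow> x \<in> act \<Psi> h"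
  using assms
proof (induction arbitrary: \<Psi>)
  case one
  then show ?case using act_one by simp
next
  case (incl h)
  then obtain k where k: "k < n" "int k \<noteq> i" "h = s k" by auto
  then show ?case using act_s incl exch_prop[OF Qpoly incl.prems(1), of "int k"] by auto
next
  case (inv h)
  then obtain k where k: "k < n" "int k \<noteq> i" "h = s k" by auto
  then show ?case using act_s inv exch_prop[OF Qpoly inv.prems(1), of "int k"] s_inv by auto
next
  case (eng h1 h2)
  have sub: "s ` {k. k < n \<and> int k \<noteq> i} \<subseteq> carrier G" by (rule S_sub) auto
  have c: "h1 \<in> carrier G" "h2 \<in> carrier G" using eng generate_in_carrier[OF sub] by auto
  have "x \<in> act \<Psi> h1" using eng by blast
  then have "x \<in> act (act \<Psi> h1) h2" using eng.IH(2) act_flag eng c by blast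
  then show ?case using act_mult eng c by simp
qed

lemma mem_coset: "w \<in> carrier G \<Longrightarrow> w \<in> N <#> (w <# H i)"
proof -
  assume w: "w \<in> carrier G"
  have "\<one> \<in> N" using Nsub subgroup.one_closed by blast
  moreover have "\<one> \<in> H i" using H_subgroup subgroup.one_closed by blast
  ultimately have "\<one> \<otimes> (w \<otimes> \<one>) \<in> N <#> (w <# H i)"
    unfolding set_mult_def l_coset_def by blast
  then show ?thesis using w by simp
qed

lemma qflag_flag:
  assumes w: "w \<in> carrier G"
  shows "qflag G s n N w \<in> FL"
proof (rule chain_full_max[OF Qpoly])
  show "pchain Fs qle (qflag G s n N w)"
    unfolding pchain_def qflag_def qfaces_def qle_def using w mem_coset[OF w]
    by (auto, blast+)
  fix r :: int assume "-1 \<le> r" "r \<le> int n"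
  then show "\<exists>e\<in>qflag G s n N w. fst e = r" unfolding qflag_def by auto
qed

lemma qflag_face:
  assumes w: "w \<in> carrier G" and r: "-1 \<le> i" "i \<le> int n"
  shows "face_of_rank fst (qflag G s n N w) i = (i, N <#> (w <# H i))"
  by (rule face_of_rank_eq[OF Qpoly qflag_flag[OF w]]) (use r in \<open>auto simp: qflag_def\<close>)

lemma core:
  assumes w: "w \<in> carrier G" and hw: "act \<Phi>0 w = qflag G s n N w" and i: "i < n"
  shows "act \<Phi>0 (w \<otimes> s i) = qflag G s n N (w \<otimes> s i)"
proof -
  let ?Q = "qflag G s n N w"
  let ?Q' = "qflag G s n N (w \<otimes> s i)"
  have si: "s i \<in> carrier G" using s_car i .
  have wsi: "w \<otimes> s i \<in> carrier G" using w si by simp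
  have Qf: "?Q \<in> FL" using qflag_flag w by blast
  have Q'f: "?Q' \<in> FL" using qflag_flag wsi by blast
  have Pf: "\<Phi>0 \<in> FL" using qflag_flag by simp
  have ii: "0 \<le> int i" "int i < int n" using i by auto
  have E: "act \<Phi>0 (w \<otimes> s i) = exch Fs qle fst (int i) ?Q"
    using act_mult[OF Pf w si] hw act_s[OF Qf i] by simp
  note EP = exch_prop[OF Qpoly Qf ii]
  have others: "\<forall>a\<in>?Q. fst a \<noteq> int i \<longrightarrow> a \<in> ?Q'"
  proof (intro ballI impI)
    fix a assume a: "a \<in> ?Q" "fst a \<noteq> int i"
    then obtain j where j: "a = (j, N <#> (w <# H j))" "-1 \<le> j" "j \<le> int n" unfolding qflag_def by auto
    have sH: "s i \<in> H j" using s_in_H[OF i] a j by simp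
    have Hsub: "H j \<subseteq> carrier G" using H_subgroup subgroup.subset by blast
    have "(w \<otimes> s i) <# H j = w <# (s i <# H j)" using lcos_m_assoc[OF Hsub w si] by simp
    also have "s i <# H j = H j" using coset_join3[OF si H_subgroup sH] .
    finally show "a \<in> ?Q'" using j unfolding qflag_def by auto
  qed
  have ne: "?Q' \<noteq> ?Q"
  proof
    assume eq: "?Q' = ?Q"
    have "face_of_rank fst ?Q' (int i) = face_of_rank fst ?Q (int i)" using eq by simp
    then have ceq: "N <#> ((w \<otimes> s i) <# H (int i)) = N <#> (w <# H (int i))"
      using qflag_face[OF w, of "int i"] qflag_face[OF wsi, of "int i"] i by simp
    then have "w \<otimes> s i \<in> N <#> (w <# H (int i))" using mem_coset[OF wsi, of "int i"] by simp
    then obtain m h where mh: "m \<in> N" "h \<in> H (int i)" "w \<otimes> s i = m \<otimes> (w \<otimes> h)"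
      unfolding set_mult_def l_coset_def by blast
    have mc: "m \<in> carrier G" by (rule subgroup.mem_carrier[OF Nsub mh(1)])
    have hc: "h \<in> carrier G" by (rule subgroup.mem_carrier[OF H_subgroup mh(2)])
    have mstab: "act \<Phi>0 m = \<Phi>0" using nstab mh(1) by blast
    have "act \<Phi>0 (w \<otimes> s i) = act \<Phi>0 (m \<otimes> (w \<otimes> h))" using mh by simp
    also have "\<dots> = act (act \<Phi>0 m) (w \<otimes> h)" using act_mult[OF Pf mc] w hc by simp
    also have "\<dots> = act ?Q h" using mstab act_mult[OF Pf w hc] hw by simp
    finally have Eh: "act \<Phi>0 (w \<otimes> s i) = act ?Q h" .
    let ?z = "(int i, N <#> (w <# H (int i)))"
    have zQ: "?z \<in> ?Q" unfolding qflag_def using i by auto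
    have "?z \<in> act ?Q h"
      by (rule act_keep[where i = "int i", OF _ Qf zQ]) (use mh(2) in \<open>simp_all add: Hsub_def\<close>)
    then have zE: "?z \<in> exch Fs qle fst (int i) ?Q" using Eh E by simp
    have "?Q \<subseteq> exch Fs qle fst (int i) ?Q"
    proof
      fix a assume a: "a \<in> ?Q"
      show "a \<in> exch Fs qle fst (int i) ?Q"
      proof (cases "fst a = int i")
        case True
        then have "a = ?z" using a unfolding qflag_def by auto
        then show ?thesis using zE by simp
      qed (use EP a in blast)
    qed
    then have "exch Fs qle fst (int i) ?Q = ?Q" using flag_max[OF Qf flag_chain] EP by blast
    then show False using EP by simp
  qed
  have "exch Fs qle fst (int i) ?Q = ?Q'"
    by (rule exch_eq[OF Qpoly Qf ii Q'f ne others])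
  then show ?thesis using E by simp
qed

lemma L_gen:
  assumes "g \<in> generate G (s ` {..<n})"
  shows "w \<in> carrier G \<Longrightarrow> act \<Phi>0 w = qflag G s n N w \<Longrightarrow> act \<Phi>0 (w \<otimes> g) = qflag G s n N (w \<otimes> g)"
  using assms
proof (induction arbitrary: w)
  case one
  then show ?case by simp
next
  case (incl h)
  then show ?case using core by auto
next
  case (inv h)
  then show ?case using core s_inv by auto
next
  case (eng h1 h2)
  have c: "h1 \<in> carrier G" "h2 \<in> carrier G" using eng gen by auto
  have "act \<Phi>0 (w \<otimes> h1) = qflag G s n N (w \<otimes> h1)" using eng.IH(1) eng by blast
  then have "act \<Phi>0 ((w \<otimes> h1) \<otimes> h2) = qflag G s n N ((w \<otimes> h1) \<otimes> h2)"
    using eng.IH(2) eng c by simp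
  then show ?case using m_assoc eng c by simp
qed

lemma L: "g \<in> carrier G \<Longrightarrow> act \<Phi>0 g = qflag G s n N g"
proof -
  assume g: "g \<in> carrier G"
  have gg: "g \<in> generate G (s ` {..<n})" using g gen by simp
  have P0: "\<Phi>0 \<in> FL" using qflag_flag[OF one_closed] .
  have "act \<Phi>0 (\<one> \<otimes> g) = qflag G s n N (\<one> \<otimes> g)"
    by (rule L_gen[OF gg]) (simp_all add: act_one[OF P0])
  then show ?thesis using g by simp
qed

end




context setting
begin

lemma foldr_lem:
  "(\<forall>i\<in>set xs. s (\<pi> i) \<in> carrier G) \<Longrightarrow> z \<in> carrier G \<Longrightarrow>
   foldr (\<lambda>i acc. s (\<pi> i) \<otimes> acc) xs z = foldr (\<lambda>i acc. s (\<pi> i) \<otimes> acc) xs \<one> \<otimes> z \<and>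
   foldr (\<lambda>i acc. s (\<pi> i) \<otimes> acc) xs \<one> \<in> carrier G"
  by (induction xs) (auto simp: m_assoc)

lemma petrie_act:
  assumes pi: "bij_betw \<pi> {..<n} {..<n}"
  shows "k \<le> n \<Longrightarrow> \<Psi> \<in> FL \<Longrightarrow>
    petrie_map Fs qle fst \<pi> k \<Psi> = act \<Psi> (foldr (\<lambda>i acc. s (\<pi> i) \<otimes> acc) [0..<k] \<one>) \<and>
    foldr (\<lambda>i acc. s (\<pi> i) \<otimes> acc) [0..<k] \<one> \<in> carrier G"
proof (induction k)
  case 0
  then show ?case using act_one by simp
next
  case (Suc k)
  let ?c = "foldr (\<lambda>i acc. s (\<pi> i) \<otimes> acc) [0..<k] \<one>"
  have pin: "\<pi> i < n" if "i < n" for i using bij_betwE[OF pi] that by blast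
  have pik: "\<pi> k < n" using pin Suc.prems by simp
  have allc: "\<forall>i\<in>set [0..<k]. s (\<pi> i) \<in> carrier G"
    using pin Suc.prems s_car by simp
  have IH: "petrie_map Fs qle fst \<pi> k \<Psi> = act \<Psi> ?c" "?c \<in> carrier G" using Suc by auto
  have sc: "s (\<pi> k) \<in> carrier G" using s_car pik .
  have fe: "foldr (\<lambda>i acc. s (\<pi> i) \<otimes> acc) [0..<Suc k] \<one> = ?c \<otimes> s (\<pi> k)"
    using foldr_lem[OF allc, of "s (\<pi> k)"] sc by simp
  have "petrie_map Fs qle fst \<pi> (Suc k) \<Psi> = exch Fs qle fst (int (\<pi> k)) (act \<Psi> ?c)"
    using IH by simp
  also have "\<dots> = act (act \<Psi> ?c) (s (\<pi> k))" using act_s[OF act_flag[OF Suc.prems(2) IH(2)] pik] by simp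
  also have "\<dots> = act \<Psi> (?c \<otimes> s (\<pi> k))" using act_mult[OF Suc.prems(2) IH(2) sc] by simp
  finally show ?case using fe IH sc by simp
qed

lemma seq_act:
  assumes sig: "\<sigma> \<in> carrier G" and Pm: "\<forall>\<Psi>\<in>FL. Pm \<Psi> = act \<Psi> \<sigma>" and Psi: "\<Psi> \<in> FL"
  shows "petrie_seq Fs qle Pm \<Psi> k = act \<Psi> (\<sigma> [^] k)"
proof -
  have pos: "(Pm ^^ m) \<Psi> = act \<Psi> (\<sigma> [^] int m)" for m
  proof (induction m)
    case 0 then show ?case using act_one Psi by simp
  next
    case (Suc m)
    have e: "\<sigma> [^] int (Suc m) = \<sigma> [^] int m \<otimes> \<sigma>"
      by (simp only: int_pow_int nat_pow_Suc)
    have "(Pm ^^ Suc m) \<Psi> = act (act \<Psi> (\<sigma> [^] int m)) \<sigma>"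
      using Suc Pm act_flag[OF Psi] sig by simp
    also have "\<dots> = act \<Psi> (\<sigma> [^] int (Suc m))" using act_mult[OF Psi _ sig] e sig by simp
    finally show ?case .
  qed
  let ?Iv = "inv_into FL Pm"
  have injP: "inj_on Pm FL"
  proof (rule inj_onI)
    fix x y assume xy: "x \<in> FL" "y \<in> FL" "Pm x = Pm y"
    then have "act (act x \<sigma>) (inv \<sigma>) = act (act y \<sigma>) (inv \<sigma>)" using Pm by simp
    then show "x = y" using act_mult[symmetric] xy sig act_one by simp
  qed
  have Iv: "?Iv XX = act XX (inv \<sigma>)" if XX: "XX \<in> FL" for XX
  proof (rule inv_into_f_eq[OF injP])
    show "act XX (inv \<sigma>) \<in> FL" using act_flag XX sig by simp
    show "Pm (act XX (inv \<sigma>)) = XX" using Pm act_flag XX sig act_mult[symmetric] act_one by simp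
  qed
  have neg: "(?Iv ^^ m) \<Psi> = act \<Psi> (\<sigma> [^] (- int m))" for m
  proof (induction m)
    case 0 then show ?case using act_one Psi by simp
  next
    case (Suc m)
    have h1: "- int (Suc m) = - int m + (-1)" by simp
    have "\<sigma> [^] (- int (Suc m)) = \<sigma> [^] (- int m) \<otimes> \<sigma> [^] (-1::int)"
      unfolding h1 by (rule int_pow_mult[OF sig])
    moreover have "\<sigma> [^] (-1::int) = inv \<sigma>" using int_pow_neg[OF sig, of 1] sig by simp
    ultimately have e: "\<sigma> [^] (- int (Suc m)) = \<sigma> [^] (- int m) \<otimes> inv \<sigma>" by simp
    have "(?Iv ^^ Suc m) \<Psi> = act (act \<Psi> (\<sigma> [^] (- int m))) (inv \<sigma>)"
      using Suc Iv act_flag[OF Psi] sig by simp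
    also have "\<dots> = act \<Psi> (\<sigma> [^] (- int (Suc m)))" using act_mult[OF Psi] e sig by simp
    finally show ?case .
  qed
  show ?thesis
  proof (cases "0 \<le> k")
    case True
    then show ?thesis unfolding petrie_seq_def using pos[of "nat k"] by simp
  next
    case False
    then show ?thesis unfolding petrie_seq_def using neg[of "nat (-k)"] by simp
  qed
qed

lemma claimC:
  assumes u: "u \<in> carrier G" and sig: "\<sigma> \<in> carrier G" and fin: "finite (carrier G)" and i: "i < n"
    and cnd: "\<forall>k::nat. 1 \<le> k \<and> k < card {act (act \<Phi>0 u) \<alpha> | \<alpha>. \<alpha> \<in> generate G {\<sigma>}} \<longrightarrow>
                  ((\<sigma> [^] k) <# H (int i)) \<inter> ((inv u <# N) #> u) = {}"
    and fe: "face_of_rank fst (act \<Phi>0 u) (int i) = face_of_rank fst (act (act \<Phi>0 u) (\<sigma> [^] (k::int))) (int i)"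
  shows "act (act \<Phi>0 u) (\<sigma> [^] k) = act \<Phi>0 u"
proof -
  define \<Psi>0 where "\<Psi>0 = act \<Phi>0 u"
  define Orb where "Orb = {act (act \<Phi>0 u) \<alpha> | \<alpha>. \<alpha> \<in> generate G {\<sigma>}}"
  define m where "m = card Orb"
  have Pf: "\<Phi>0 \<in> FL" using qflag_flag by simp
  have Psi0: "\<Psi>0 = qflag G s n N u" using L[OF u] \<Psi>0_def by simp
  have Psif: "\<Psi>0 \<in> FL" using Psi0 qflag_flag[OF u] by simp
  have pw: "\<sigma> [^] (x::int) \<in> carrier G" for x using sig by simp
  have actpow: "act \<Psi>0 x = qflag G s n N (u \<otimes> x)" if "x \<in> carrier G" for x
    using act_mult[OF Pf u that] L[of "u \<otimes> x"] u that \<Psi>0_def by simp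
  have ii: "-1 \<le> int i" "int i \<le> int n" using i by auto
  have stepA: "face_of_rank fst (act \<Psi>0 (\<sigma> [^] int k')) (int i) \<noteq> face_of_rank fst \<Psi>0 (int i)"
    if k': "1 \<le> k'" "k' < m" for k' :: nat
  proof
    assume eq: "face_of_rank fst (act \<Psi>0 (\<sigma> [^] int k')) (int i) = face_of_rank fst \<Psi>0 (int i)"
    let ?x = "\<sigma> [^] k'"
    have xc: "?x \<in> carrier G" using sig by simp
    have ux: "u \<otimes> ?x \<in> carrier G" using u xc by simp
    have "N <#> ((u \<otimes> ?x) <# H (int i)) = N <#> (u <# H (int i))"
    proof -
      have e0: "\<sigma> [^] (int k') = ?x" by (rule int_pow_int)
      have "face_of_rank fst (qflag G s n N (u \<otimes> ?x)) (int i) = face_of_rank fst (qflag G s n N u) (int i)"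
        using eq[unfolded e0] actpow[OF xc] Psi0 by simp
      then show ?thesis using qflag_face[OF ux ii] qflag_face[OF u ii] by simp
    qed
    then have "u \<otimes> ?x \<in> N <#> (u <# H (int i))" using mem_coset[OF ux, of "int i"] by simp
    then obtain mm h where mh: "mm \<in> N" "h \<in> H (int i)" "u \<otimes> ?x = mm \<otimes> (u \<otimes> h)"
      unfolding set_mult_def l_coset_def by blast
    have mc: "mm \<in> carrier G" by (rule subgroup.mem_carrier[OF Nsub mh(1)])
    have hc: "h \<in> carrier G" by (rule subgroup.mem_carrier[OF H_subgroup mh(2)])
    have ih: "inv h \<in> H (int i)" by (rule subgroup.m_inv_closed[OF H_subgroup mh(2)])
    have x1: "?x = inv u \<otimes> (mm \<otimes> (u \<otimes> h))"
      using inv_solve_left[OF xc u, of "mm \<otimes> (u \<otimes> h)"] mh mc hc u by simp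
    have x2: "?x \<otimes> inv h = (inv u \<otimes> mm) \<otimes> u"
      using x1 mc hc u by (simp add: m_assoc)
    have "?x \<otimes> inv h \<in> (?x <# H (int i))" unfolding l_coset_def using ih by blast
    moreover have "?x \<otimes> inv h \<in> ((inv u <# N) #> u)"
      unfolding x2 r_coset_def l_coset_def using mh(1) by blast
    moreover have "((?x) <# H (int i)) \<inter> ((inv u <# N) #> u) = {}"
      using cnd k' m_def Orb_def by blast
    ultimately show False by blast
  qed
  have Ofin: "finite Orb"
  proof -
    have "Orb = (\<lambda>\<alpha>. act \<Psi>0 \<alpha>) ` generate G {\<sigma>}" unfolding Orb_def \<Psi>0_def by auto
    moreover have "generate G {\<sigma>} \<subseteq> carrier G" using generate_incl sig by simp
    ultimately show ?thesis using fin finite_subset by auto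
  qed
  define gp where "gp p = act \<Psi>0 (\<sigma> [^] int p)" for p :: nat
  have gpO: "gp ` {0..m} \<subseteq> Orb"
    unfolding gp_def Orb_def \<Psi>0_def using generate_pow[OF sig] by blast
  have "\<not> inj_on gp {0..m}"
  proof
    assume "inj_on gp {0..m}"
    then have "card {0..m} \<le> card Orb" using card_inj_on_le[OF _ gpO Ofin] by blast
    then show False using m_def by simp
  qed
  then obtain p q where pq: "p \<in> {0..m}" "q \<in> {0..m}" "p < q" "gp p = gp q"
    unfolding inj_on_def by (metis linorder_neqE_nat)
  define d where "d = q - p"
  have d: "1 \<le> d" "d \<le> m" using pq d_def by auto
  have dstab: "act \<Psi>0 (\<sigma> [^] int d) = \<Psi>0"
  proof -
    have h: "int d = int q + (- int p)" using d_def pq by simp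
    have e1: "\<sigma> [^] int d = \<sigma> [^] int q \<otimes> \<sigma> [^] (- int p)"
      unfolding h by (rule int_pow_mult[OF sig])
    have e2: "\<sigma> [^] int p \<otimes> \<sigma> [^] (- int p) = \<one>"
      using int_pow_mult[OF sig, of "int p" "- int p"] by simp
    have "act \<Psi>0 (\<sigma> [^] int d) = act (gp q) (\<sigma> [^] (- int p))"
      unfolding gp_def using e1 act_mult[OF Psif pw pw] by simp
    also have "\<dots> = act (gp p) (\<sigma> [^] (- int p))" using pq by simp
    also have "\<dots> = act \<Psi>0 (\<sigma> [^] int p \<otimes> \<sigma> [^] (- int p))"
      unfolding gp_def by (rule act_mult[OF Psif pw pw, symmetric])
    also have "\<dots> = act \<Psi>0 \<one>" using e2 by simp
    finally show ?thesis using act_one Psif by simp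
  qed
  define S where "S = {g \<in> carrier G. act \<Psi>0 g = \<Psi>0}"
  have Ssub: "subgroup S G"
  proof (rule subgroupI)
    show "S \<subseteq> carrier G" unfolding S_def by auto
    show "S \<noteq> {}" unfolding S_def using act_one Psif by auto
    fix a assume a: "a \<in> S"
    then have ac: "a \<in> carrier G" "act \<Psi>0 a = \<Psi>0" unfolding S_def by auto
    have "act \<Psi>0 (inv a) = act (act \<Psi>0 a) (inv a)" using ac by simp
    also have "\<dots> = \<Psi>0" using act_mult[OF Psif ac(1), of "inv a", symmetric] ac act_one Psif by simp
    finally show "inv a \<in> S" unfolding S_def using ac by simp
    fix b assume b: "b \<in> S"
    then show "a \<otimes> b \<in> S" using a act_mult[OF Psif] unfolding S_def by auto
  qed
  have mult_stab: "act \<Psi>0 (\<sigma> [^] (int d * z)) = \<Psi>0" for z :: int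
  proof -
    have "\<sigma> [^] int d \<in> S" unfolding S_def using dstab pw by simp
    then have "(\<sigma> [^] int d) [^] z \<in> S" using subgroup_int_pow_closed[OF Ssub] by blast
    then show ?thesis using int_pow_pow[OF sig] unfolding S_def by simp
  qed
  define rr where "rr = k mod int d"
  have rr: "0 \<le> rr" "rr < int d" using d rr_def by auto
  have kk: "k = int d * (k div int d) + rr" unfolding rr_def by simp
  have red: "act \<Psi>0 (\<sigma> [^] k) = act \<Psi>0 (\<sigma> [^] rr)"
  proof -
    have "\<sigma> [^] (int d * (k div int d) + rr) = \<sigma> [^] (int d * (k div int d)) \<otimes> \<sigma> [^] rr"
      by (rule int_pow_mult[OF sig])
    then have "\<sigma> [^] k = \<sigma> [^] (int d * (k div int d)) \<otimes> \<sigma> [^] rr"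
      by (simp only: kk[symmetric])
    then show ?thesis using act_mult[OF Psif pw pw] mult_stab by simp
  qed
  show ?thesis
  proof (cases "rr = 0")
    case True
    then show ?thesis using red act_one Psif \<Psi>0_def by simp
  next
    case False
    define k' where "k' = nat rr"
    have k': "1 \<le> k'" "k' < m" using rr False d k'_def by auto
    have "rr = int k'" using rr k'_def by simp
    then have "face_of_rank fst (act \<Psi>0 (\<sigma> [^] int k')) (int i) = face_of_rank fst \<Psi>0 (int i)"
      using fe red \<Psi>0_def by simp
    then show ?thesis using stepA[OF k'] by simp
  qed
qed

end


theorem theorem7:
  fixes G :: "('a, 'b) monoid_scheme" and s :: "nat \<Rightarrow> 'a" and n :: nat
    and N :: "'a set" and act :: "(int \<times> 'a set) set \<Rightarrow> 'a \<Rightarrow> (int \<times> 'a set) set"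
    and u :: "nat \<Rightarrow> 'a" and r :: nat
  assumes Wstr: "string_C_group G s n"
    and Wfin: "finite (carrier G)"
    and Nsub: "subgroup N G"
    and Qpoly: "polytope (qfaces G s n N) qle fst n"
    and Qact: "flag_action G s n (qfaces G s n N) qle fst act"
    and Nstab: "N = {g \<in> carrier G. act (qflag G s n N \<one>\<^bsub>G\<^esub>) g = qflag G s n N \<one>\<^bsub>G\<^esub>}"
    and u1: "u 1 = \<one>\<^bsub>G\<^esub>"
    and uG: "\<forall>j\<in>{1..r}. u j \<in> carrier G"
    and reps: "\<forall>\<Psi>\<in>pflags (qfaces G s n N) qle. \<exists>!j. j \<in> {1..r} \<and>
               \<Psi> \<in> {f ` act (qflag G s n N \<one>\<^bsub>G\<^esub>) (u j) | f. f \<in> poset_aut (qfaces G s n N) qle}"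
    and cond: "\<forall>\<sigma>. coxeter_element G s n \<sigma> \<longrightarrow>
               (\<forall>i<n. \<forall>j\<in>{1..r}. \<forall>k::nat.
                  1 \<le> k \<and> k < card {act (act (qflag G s n N \<one>\<^bsub>G\<^esub>) (u j)) \<alpha> | \<alpha>. \<alpha> \<in> generate G {\<sigma>}} \<longrightarrow>
                  ((\<sigma> [^]\<^bsub>G\<^esub> k) <#\<^bsub>G\<^esub> Hsub G s n (int i)) \<inter>
                  ((inv\<^bsub>G\<^esub> (u j) <#\<^bsub>G\<^esub> N) #>\<^bsub>G\<^esub> u j) = {})"
  shows "acoptic (qfaces G s n N) qle fst n"
proof -
  interpret S: setting G s n N act
    by (intro setting.intro Wstr Nsub Qpoly Qact Nstab)
  show ?thesis
    unfolding acoptic_def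
  proof (intro allI impI ballI)
    fix \<pi> :: "nat \<Rightarrow> nat" and \<Phi> and a b i :: int
    assume pi: "bij_betw \<pi> {..<n} {..<n}" and Phi: "\<Phi> \<in> pflags (qfaces G s n N) qle"
      and hyp1: "0 \<le> i \<and> i < int n"
      and hyp2: "face_of_rank fst (petrie_seq (qfaces G s n N) qle (petrie_map (qfaces G s n N) qle fst \<pi> n) \<Phi> a) i =
          face_of_rank fst (petrie_seq (qfaces G s n N) qle (petrie_map (qfaces G s n N) qle fst \<pi> n) \<Phi> b) i"
    have hyp: "0 \<le> i \<and> i < int n \<and>
          face_of_rank fst (petrie_seq (qfaces G s n N) qle (petrie_map (qfaces G s n N) qle fst \<pi> n) \<Phi> a) i =
          face_of_rank fst (petrie_seq (qfaces G s n N) qle (petrie_map (qfaces G s n N) qle fst \<pi> n) \<Phi> b) i"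
      using hyp1 hyp2 by blast
    define \<sigma> where "\<sigma> = foldr (\<lambda>i acc. s (\<pi> i) \<otimes>\<^bsub>G\<^esub> acc) [0..<n] \<one>\<^bsub>G\<^esub>"
    let ?Pm = "petrie_map (qfaces G s n N) qle fst \<pi> n"
    have PA: "\<forall>\<Psi>\<in>pflags (qfaces G s n N) qle. ?Pm \<Psi> = act \<Psi> \<sigma>" and sig: "\<sigma> \<in> carrier G"
      using S.petrie_act[OF pi, of n] Phi unfolding \<sigma>_def by auto
    have cox: "coxeter_element G s n \<sigma>" unfolding coxeter_element_def \<sigma>_def using pi by blast
    have seq: "\<And>x. petrie_seq (qfaces G s n N) qle ?Pm \<Phi> x = act \<Phi> (\<sigma> [^]\<^bsub>G\<^esub> x)"
      using S.seq_act[OF sig PA Phi] by simp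
    define \<Phi>' where "\<Phi>' = act \<Phi> (\<sigma> [^]\<^bsub>G\<^esub> a)"
    define \<tau> where "\<tau> = \<sigma> [^]\<^bsub>G\<^esub> (b - a)"
    have tc: "\<tau> \<in> carrier G" unfolding \<tau>_def using sig by simp
    have Phi'f: "\<Phi>' \<in> pflags (qfaces G s n N) qle" unfolding \<Phi>'_def using S.act_flag Phi sig by simp
    have sb: "petrie_seq (qfaces G s n N) qle ?Pm \<Phi> b = act \<Phi>' \<tau>"
    proof -
      have "\<sigma> [^]\<^bsub>G\<^esub> b = \<sigma> [^]\<^bsub>G\<^esub> a \<otimes>\<^bsub>G\<^esub> \<tau>"
        unfolding \<tau>_def using S.int_pow_mult[OF sig, of a "b - a"] by simp
      then show ?thesis using seq S.act_mult[OF Phi _ tc] sig unfolding \<Phi>'_def by simp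
    qed
    have sa: "petrie_seq (qfaces G s n N) qle ?Pm \<Phi> a = \<Phi>'" using seq \<Phi>'_def by simp
    obtain j where j: "j \<in> {1..r}"
      "\<Phi>' \<in> {f ` act (qflag G s n N \<one>\<^bsub>G\<^esub>) (u j) | f. f \<in> poset_aut (qfaces G s n N) qle}"
      using reps[rule_format, OF Phi'f] by (rule ex1E) (rule that, blast, blast)
    obtain f where f: "f \<in> poset_aut (qfaces G s n N) qle"
      "\<Phi>' = f ` act (qflag G s n N \<one>\<^bsub>G\<^esub>) (u j)"
      using j(2) by blast
    have jf: "j \<in> {1..r}" "f \<in> poset_aut (qfaces G s n N) qle"
      "\<Phi>' = f ` act (qflag G s n N \<one>\<^bsub>G\<^esub>) (u j)" using j(1) f by auto
    let ?\<Psi>0 = "act (qflag G s n N \<one>\<^bsub>G\<^esub>) (u j)"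
    have uj: "u j \<in> carrier G" using uG jf by blast
    have Psi0f: "?\<Psi>0 \<in> pflags (qfaces G s n N) qle" using S.act_flag S.qflag_flag uj by simp
    have at: "act \<Phi>' \<tau> = f ` act ?\<Psi>0 \<tau>" using S.aut_act[OF jf(2) Psi0f tc] jf by simp
    have Tf: "act ?\<Psi>0 \<tau> \<in> pflags (qfaces G s n N) qle" using S.act_flag[OF Psi0f tc] .
    have ii: "-1 \<le> i" "i \<le> int n" using hyp by auto
    have "f (face_of_rank fst ?\<Psi>0 i) = f (face_of_rank fst (act ?\<Psi>0 \<tau>) i)"
      using hyp sa sb at jf(3) aut_face[OF Qpoly jf(2) Psi0f ii] aut_face[OF Qpoly jf(2) Tf ii] by simp
    moreover have "face_of_rank fst ?\<Psi>0 i \<in> qfaces G s n N"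
      using face_of_rank_in[OF Qpoly Psi0f ii] flag_sub[OF Psi0f] by blast
    moreover have "face_of_rank fst (act ?\<Psi>0 \<tau>) i \<in> qfaces G s n N"
      using face_of_rank_in[OF Qpoly Tf ii] flag_sub[OF Tf] by blast
    ultimately have feq: "face_of_rank fst ?\<Psi>0 i = face_of_rank fst (act ?\<Psi>0 \<tau>) i"
      using aut_facts(2)[OF jf(2)] unfolding inj_on_def by blast
    have ni: "nat i < n" "int (nat i) = i" using hyp by auto
    have cnd: "\<forall>k::nat. 1 \<le> k \<and> k < card {act (act (qflag G s n N \<one>\<^bsub>G\<^esub>) (u j)) \<alpha> | \<alpha>. \<alpha> \<in> generate G {\<sigma>}} \<longrightarrow>
                  ((\<sigma> [^]\<^bsub>G\<^esub> k) <#\<^bsub>G\<^esub> Hsub G s n (int (nat i))) \<inter>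
                  ((inv\<^bsub>G\<^esub> (u j) <#\<^bsub>G\<^esub> N) #>\<^bsub>G\<^esub> u j) = {}"
      using cond[rule_format, OF cox ni(1) jf(1)] by blast
    have fe': "face_of_rank fst (act (qflag G s n N \<one>\<^bsub>G\<^esub>) (u j)) (int (nat i)) =
      face_of_rank fst (act (act (qflag G s n N \<one>\<^bsub>G\<^esub>) (u j)) (\<sigma> [^]\<^bsub>G\<^esub> (b - a))) (int (nat i))"
      using feq ni(2) unfolding \<tau>_def by simp
    have "act ?\<Psi>0 (\<sigma> [^]\<^bsub>G\<^esub> (b - a)) = ?\<Psi>0"
      by (rule S.claimC[OF uj sig Wfin ni(1) cnd fe'])
    then have "act ?\<Psi>0 \<tau> = ?\<Psi>0" unfolding \<tau>_def .
    then show "petrie_seq (qfaces G s n N) qle ?Pm \<Phi> a = petrie_seq (qfaces G s n N) qle ?Pm \<Phi> b"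
      using sa sb at jf(3) by simp
  qed
qed

end
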